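(* Let $r\geq 3$, let $X$ be a finite set of cardinality $n\geq 1$, and let $A_1,\dots,A_r\subseteq X$. For $k\in\{1,\dots,r\}$ put $$S_k=\sum_{1\leq i_1<\dots<i_k\leq r}\left|A_{i_1}\cap\dots\cap A_{i_k}\right|.$$ Then for every $1\leq k\leq r$, $$S_k\geq\binom{\lfloor S_1/n\rfloor}{k-1}\left(S_1-\frac{k-1}{k}\left(\lfloor S_1/n\rfloor+1\right)n\right).$$ *)

theory Defs
  imports Complex_Main
begin

definition S :: "nat \<Rightarrow> (nat \<Rightarrow> 'a set) \<Rightarrow> nat \<Rightarrow> nat" where
  "S r A k = (\<Sum>K\<in>{K. K \<subseteq> {1..r} \<and> card K = k}. card (\<Inter>i\<in>K. A i))"

end

theory Submission
  imports Defs
begin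

lemma choose_id: "Suc j * (m choose Suc j) = (m - j) * (m choose j)"
proof (cases m)
  case 0 then show ?thesis by simp
next
  case (Suc n)
  show ?thesis unfolding Suc
    using Suc_times_binomial[of j n] binomial_absorb_comp[of "Suc n" j] by simp
qed

lemma secant_ge:
  fixes d m j :: nat
  shows "real (d choose Suc j) \<ge> real (m choose Suc j) + real (m choose j) * (real d - real m)"
proof -
  define g where "g d = real (d choose Suc j) - (real (m choose Suc j) + real (m choose j) * (real d - real m))" for d
  have gstep: "g (Suc d) = g d + real (d choose j) - real (m choose j)" for d
    by (simp add: g_def algebra_simps)
  have gm: "g m = 0" by (simp add: g_def)
  have mono: "real (d choose j) \<le> real (e choose j)" if "d \<le> e" for d e
    using binomial_right_mono[OF that] by simp
  have "g d \<ge> 0"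
  proof (cases "d \<le> m")
    case True
    then show ?thesis
    proof (induction d rule: inc_induct)
      case base then show ?case using gm by simp
    next
      case (step n)
      have "g (Suc n) = g n + real (n choose j) - real (m choose j)" by (rule gstep)
      moreover have "real (n choose j) \<le> real (m choose j)" using mono step.hyps by simp
      ultimately show ?case using step.IH by linarith
    qed
  next
    case False
    then have "m \<le> d" by simp
    then show ?thesis
    proof (induction d rule: dec_induct)
      case base then show ?case using gm by simp
    next
      case (step n)
      have "g (Suc n) = g n + real (n choose j) - real (m choose j)" by (rule gstep)
      moreover have "real (m choose j) \<le> real (n choose j)" using mono step.hyps by simp
      ultimately show ?case using step.IH by linarith
    qed
  qed
  then show ?thesis by (simp add: g_def)
qed

lemma pointwise:
  fixes d m k :: nat
  assumes "1 \<le> k"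
  shows "real (d choose k) \<ge> real (m choose (k - 1)) * (real d - real (k - 1) / real k * (real m + 1))"
proof -
  obtain j where k: "k = Suc j" using assms by (cases k) auto
  have id: "real (Suc j) * real (m choose Suc j) = real (m - j) * real (m choose j)"
    using choose_id[of j m] by (metis of_nat_mult)
  have lin: "real (m choose Suc j) + real (m choose j) * (real d - real m)
      = real (m choose j) * (real d - real j / real (Suc j) * (real m + 1))"
  proof (cases "j \<le> m")
    case True
    then have "real (m - j) = real m - real j" by simp
    with id have "real (m choose Suc j) = (real m - real j) * real (m choose j) / real (Suc j)"
      by (simp add: field_simps)
    then show ?thesis by (simp add: field_simps)
  next
    case False
    then show ?thesis by (simp add: binomial_eq_0)
  qed
  show ?thesis using secant_ge[of m j d] lin k by simp
qed

lemma double_count: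
  fixes X :: "'a set" and A :: "nat \<Rightarrow> 'a set"
  assumes "finite X" "\<And>i. i \<in> {1..r} \<Longrightarrow> A i \<subseteq> X" "1 \<le> k"
  shows "S r A k = (\<Sum>x\<in>X. card {i\<in>{1..r}. x \<in> A i} choose k)"
proof -
  define I where "I x = {i\<in>{1..r}. x \<in> A i}" for x
  define KK where "KK = {K. K \<subseteq> {1..r} \<and> card K = k}"
  have finKK: "finite KK" unfolding KK_def
    by (rule finite_subset[of _ "Pow {1..r}"]) auto
  have c1: "card (\<Inter>i\<in>K. A i) = (\<Sum>x\<in>X. if K \<subseteq> I x then 1 else 0)" if "K \<in> KK" for K
  proof -
    have "K \<noteq> {}" using that assms(3) unfolding KK_def by auto
    then have "(\<Inter>i\<in>K. A i) = {x\<in>X. K \<subseteq> I x}"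
      using that assms(2) unfolding KK_def I_def by fastforce
    then show ?thesis using assms(1) by (simp add: sum.If_cases Int_def)
  qed
  have "S r A k = (\<Sum>K\<in>KK. \<Sum>x\<in>X. if K \<subseteq> I x then 1 else 0)"
    unfolding S_def KK_def[symmetric] using c1 by (rule sum.cong[OF refl])
  also have "\<dots> = (\<Sum>x\<in>X. \<Sum>K\<in>KK. if K \<subseteq> I x then 1 else 0)"
    by (rule sum.swap)
  also have "\<dots> = (\<Sum>x\<in>X. card (I x) choose k)"
  proof (rule sum.cong[OF refl])
    fix x assume "x \<in> X"
    have "(\<Sum>K\<in>KK. if K \<subseteq> I x then 1 else 0) = card {K\<in>KK. K \<subseteq> I x}"
      using finKK by (simp add: sum.If_cases Int_def)
    also have "{K\<in>KK. K \<subseteq> I x} = {K. K \<subseteq> I x \<and> card K = k}"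
      unfolding KK_def I_def by auto
    also have "card \<dots> = card (I x) choose k"
      by (rule n_subsets) (simp add: I_def)
    finally show "(\<Sum>K\<in>KK. if K \<subseteq> I x then 1 else 0) = card (I x) choose k" .
  qed
  finally show ?thesis unfolding I_def .
qed

theorem theorem3:
  fixes X :: "'a set" and A :: "nat \<Rightarrow> 'a set" and r n k :: nat
  assumes "r \<ge> 3"
    and "finite X" and "card X = n" and "n \<ge> 1"
    and "\<And>i. i \<in> {1..r} \<Longrightarrow> A i \<subseteq> X"
    and "1 \<le> k" and "k \<le> r"
  shows "real (S r A k) \<ge>
     real ((S r A 1 div n) choose (k - 1)) *
       (real (S r A 1) - (real (k - 1) / real k) * (real (S r A 1 div n) + 1) * real n)"
proof -
  define d where "d x = card {i\<in>{1..r}. x \<in> A i}" for x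
  define m where "m = S r A 1 div n"
  define c where "c = real (m choose (k - 1))"
  define t where "t = real (k - 1) / real k * (real m + 1)"
  have Sk: "S r A k = (\<Sum>x\<in>X. d x choose k)"
    using double_count[OF assms(2,5,6)] unfolding d_def .
  have S1: "S r A 1 = (\<Sum>x\<in>X. d x)"
    using double_count[OF assms(2,5), where k=1] unfolding d_def by simp
  have "(\<Sum>x\<in>X. c * (real (d x) - t)) \<le> (\<Sum>x\<in>X. real (d x choose k))"
    by (rule sum_mono) (use pointwise[OF assms(6)] in \<open>simp add: c_def t_def\<close>)
  moreover have "(\<Sum>x\<in>X. c * (real (d x) - t)) = c * (real (S r A 1) - t * real n)"
  proof -
    have "(\<Sum>x\<in>X. c * (real (d x) - t)) = c * (\<Sum>x\<in>X. real (d x)) - c * t * real (card X)"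
      by (simp add: sum_distrib_left sum_subtractf algebra_simps)
    also have "(\<Sum>x\<in>X. real (d x)) = real (S r A 1)" unfolding S1 by simp
    finally show ?thesis using assms(3) by (simp add: algebra_simps)
  qed
  ultimately have "c * (real (S r A 1) - t * real n) \<le> real (S r A k)"
    unfolding Sk by simp
  then show ?thesis unfolding c_def t_def m_def by (simp add: mult.assoc)
qed

end
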